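(* Let $\mathcal{G}=(V,\emptyset,B)$ be a connected bidirected graph with $V=\{1,\dots,p\}$, and let $q\in\mathbb{R}^p$ be a vector with all entries nonzero. Then there exists $\Sigma\in PD(\mathcal{G})$ such that the vector $\Sigma q$ has precisely one nonzero entry.
   Context: $B$ is a set of 2-element subsets of $V$ (bidirected edges); $\mathcal{G}$ is connected if any two vertices are joined by a path of such edges. $PD(\mathcal{G})$ is the set of positive definite $p\times p$ matrices $\Sigma=(\sigma_{ij})$ with $\sigma_{ij}=0$ whenever $i\ne j$ and $\{i,j\}\notin B$. *)

theory Defs
  imports "HOL-Analysis.Analysis"
begin

text \<open>Vertex set V = {1,...,p} is modelled by a finite index type 'n (CARD('n) = p).
  B is a set of 2-element subsets of the vertex set (bidirected edges).\<close>

definition bidirected_edges :: "'n set set \<Rightarrow> bool" where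
  "bidirected_edges B \<longleftrightarrow> (\<forall>e\<in>B. card e = 2)"

definition bd_connected :: "'n set set \<Rightarrow> bool" where
  "bd_connected B \<longleftrightarrow> (\<forall>i j. (\<lambda>x y. {x, y} \<in> B)\<^sup>*\<^sup>* i j)"

definition pos_def_matrix :: "real ^'n ^'n \<Rightarrow> bool" where
  "pos_def_matrix S \<longleftrightarrow> transpose S = S \<and> (\<forall>x. x \<noteq> 0 \<longrightarrow> x \<bullet> (S *v x) > 0)"

definition PD :: "'n set set \<Rightarrow> (real ^'n ^'n) set" where
  "PD B = {S. pos_def_matrix S \<and> (\<forall>i j. i \<noteq> j \<and> {i, j} \<notin> B \<longrightarrow> S $ i $ j = 0)}"

end

theory Submission
  imports Defs
begin

theorem lemma7:
  fixes B :: "'n::finite set set" and q :: "real ^'n"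
  assumes "bidirected_edges B"
    and "bd_connected B"
    and "\<forall>i. q $ i \<noteq> 0"
  shows "\<exists>S \<in> PD B. \<exists>!i. (S *v q) $ i \<noteq> 0"
proof -
  obtain r :: 'n where True by simp
  define A :: "'n \<Rightarrow> 'n \<Rightarrow> real" where "A i j = (if i \<noteq> j \<and> {i,j} \<in> B then 1 else 0)" for i j
  define deg where "deg i = (\<Sum>j\<in>UNIV. A i j)" for i
  define M where "M i j = (if i = j then deg i + (if i = r then 1 else 0) else 0) - A i j" for i j
  define S :: "real^'n^'n" where "S = (\<chi> i j. M i j / (q$i * q$j))"
  have Asym: "A i j = A j i" for i j unfolding A_def by (auto simp: insert_commute)
  have Aii: "A i i = 0" for i unfolding A_def by simp
  have A01: "A i j \<ge> 0" for i j unfolding A_def by simp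
  have Msym: "M i j = M j i" for i j unfolding M_def using Asym by auto
  have rowsum: "(\<Sum>j\<in>UNIV. M i j) = (if i = r then 1 else 0)" for i
  proof -
    have "(\<Sum>j\<in>UNIV. M i j) = (\<Sum>j\<in>UNIV. (if i = j then deg i + (if i = r then 1 else 0) else 0)) - (\<Sum>j\<in>UNIV. A i j)"
      unfolding M_def by (simp add: sum_subtractf)
    also have "\<dots> = (if i = r then 1 else 0)" by (simp add: deg_def)
    finally show ?thesis .
  qed
  have Sq: "(S *v q) $ i = (if i = r then 1 / q$i else 0)" for i
  proof -
    have "(S *v q) $ i = (\<Sum>j\<in>UNIV. M i j / (q$i * q$j) * q$j)"
      by (simp add: S_def matrix_vector_mult_def)
    also have "\<dots> = (\<Sum>j\<in>UNIV. M i j) / q$i"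
      using assms(3) by (simp add: sum_divide_distrib)
    also have "\<dots> = (if i = r then 1 / q$i else 0)" using rowsum by simp
    finally show ?thesis .
  qed
  have quad: "x \<bullet> (S *v x) = (\<lambda>y. y r ^ 2 + (\<Sum>i\<in>UNIV. \<Sum>j\<in>UNIV. A i j * (y i - y j)^2) / 2) (\<lambda>i. x$i / q$i)" for x
  proof -
    define y where "y i = x$i / q$i" for i
    have xi: "x$i = q$i * y i" for i using assms(3) by (simp add: y_def)
    have "x \<bullet> (S *v x) = (\<Sum>i\<in>UNIV. \<Sum>j\<in>UNIV. M i j * y i * y j)"
      unfolding inner_vec_def matrix_vector_mult_def S_def
      by (simp add: sum_distrib_left xi assms(3) field_simps)
    also have "\<dots> = (\<Sum>i\<in>UNIV. \<Sum>j\<in>UNIV. (if i = j then deg i + (if i = r then 1 else 0) else 0) * y i * y j)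
        - (\<Sum>i\<in>UNIV. \<Sum>j\<in>UNIV. A i j * y i * y j)"
      unfolding M_def by (simp add: sum_subtractf left_diff_distrib)
    also have "(\<Sum>i\<in>UNIV. \<Sum>j\<in>UNIV. (if i = j then deg i + (if i = r then 1 else 0) else 0) * y i * y j)
        = (\<Sum>i\<in>UNIV. deg i * (y i)^2) + (y r)^2"
    proof -
      have "(\<Sum>i\<in>UNIV. \<Sum>j\<in>UNIV. (if i = j then deg i + (if i = r then 1 else 0) else 0) * y i * y j)
          = (\<Sum>i\<in>UNIV. (deg i + (if i = r then 1 else 0)) * y i * y i)"
        by (intro sum.cong refl) (simp add: if_distrib[where f="\<lambda>z. z * _"] cong: if_cong)
      also have "\<dots> = (\<Sum>i\<in>UNIV. deg i * (y i)^2 + (if i = r then (y r)^2 else 0))"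
        by (intro sum.cong refl) (auto simp: algebra_simps power2_eq_square)
      also have "\<dots> = (\<Sum>i\<in>UNIV. deg i * (y i)^2) + (y r)^2"
        by (simp add: sum.distrib)
      finally show ?thesis .
    qed
    also have "(\<Sum>i\<in>UNIV. \<Sum>j\<in>UNIV. A i j * (y i - y j)^2)
        = (\<Sum>i\<in>UNIV. \<Sum>j\<in>UNIV. A i j * (y i)^2) + (\<Sum>i\<in>UNIV. \<Sum>j\<in>UNIV. A i j * (y j)^2)
          - 2 * (\<Sum>i\<in>UNIV. \<Sum>j\<in>UNIV. A i j * y i * y j)"
      by (simp add: power2_diff algebra_simps sum.distrib sum_subtractf sum_distrib_left)
    moreover have "(\<Sum>i\<in>UNIV. \<Sum>j\<in>UNIV. A i j * (y i)^2) = (\<Sum>i\<in>UNIV. deg i * (y i)^2)"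
      by (simp add: deg_def sum_distrib_right)
    moreover have "(\<Sum>i\<in>UNIV. \<Sum>j\<in>UNIV. A i j * (y j)^2) = (\<Sum>i\<in>UNIV. deg i * (y i)^2)"
      apply (subst sum.swap)
      by (simp add: deg_def sum_distrib_right Asym)
    ultimately show ?thesis by (simp add: y_def[symmetric])
  qed
  have pd: "pos_def_matrix S"
    unfolding pos_def_matrix_def
  proof (intro conjI allI impI)
    show "transpose S = S" unfolding transpose_def S_def
      by (simp add: vec_eq_iff Msym mult.commute)
  next
    fix x :: "real^'n" assume x0: "x \<noteq> 0"
    define y where "y i = x$i / q$i" for i
    have Q: "x \<bullet> (S *v x) = y r ^ 2 + (\<Sum>i\<in>UNIV. \<Sum>j\<in>UNIV. A i j * (y i - y j)^2) / 2"
      using quad[of x] by (simp add: y_def)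
    have nn: "(\<Sum>i\<in>UNIV. \<Sum>j\<in>UNIV. A i j * (y i - y j)^2) \<ge> 0"
      by (intro sum_nonneg mult_nonneg_nonneg A01) simp
    show "x \<bullet> (S *v x) > 0"
    proof (rule ccontr)
      assume "\<not> ?thesis"
      hence le: "y r ^ 2 + (\<Sum>i\<in>UNIV. \<Sum>j\<in>UNIV. A i j * (y i - y j)^2) / 2 \<le> 0" using Q by simp
      have yr: "y r = 0" using le nn
      proof -
        have "y r ^ 2 \<le> 0" using le nn by linarith
        thus ?thesis by simp
      qed
      have s0: "(\<Sum>i\<in>UNIV. \<Sum>j\<in>UNIV. A i j * (y i - y j)^2) = 0" using le nn
        using zero_le_power2[of "y r"] by linarith
      have each: "A i j * (y i - y j)^2 = 0" for i j
      proof -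
        have "\<forall>i\<in>UNIV. (\<Sum>j\<in>UNIV. A i j * (y i - y j)^2) = 0"
          using s0 by (subst sum_nonneg_eq_0_iff[symmetric]) (auto intro!: sum_nonneg mult_nonneg_nonneg A01)
        hence "(\<Sum>j\<in>UNIV. A i j * (y i - y j)^2) = 0" by simp
        thus ?thesis
          by (subst (asm) sum_nonneg_eq_0_iff) (auto intro!: mult_nonneg_nonneg A01)
      qed
      have step: "{a, b} \<in> B \<Longrightarrow> y a = y b" for a b
      proof (cases "a = b")
        case False
        assume "{a,b} \<in> B"
        hence "A a b = 1" using False by (simp add: A_def)
        thus ?thesis using each[of a b] by simp
      qed simp
      have reach: "(\<lambda>x y. {x, y} \<in> B)\<^sup>*\<^sup>* r j \<Longrightarrow> y j = y r" for j
        by (induction rule: rtranclp_induct) (auto dest: step)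
      have "y j = 0" for j using reach[of j] assms(2) yr unfolding bd_connected_def by auto
      hence "x$j = 0" for j using assms(3) by (simp add: y_def)
      hence "x = 0" by (simp add: vec_eq_iff)
      thus False using x0 by simp
    qed
  qed
  have "S \<in> PD B"
    unfolding PD_def using pd by (auto simp: S_def M_def A_def)
  moreover have "\<exists>!i. (S *v q) $ i \<noteq> 0"
    using Sq assms(3) by (intro ex1I[of _ r]) (auto split: if_splits)
  ultimately show ?thesis by blast
qed

end
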